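(* Let $n\ge 2$ be an integer, $\omega>0$ and $c>0$, and set $\mu_j=\omega^2+c\,(j-1)$ for $j=1,\dots,n$. Define $$\beta_j=-\sqrt{\mu_j}+\frac{1}{n-1}\sum_{k=1}^n\sqrt{\mu_k},\qquad j=1,\dots,n.$$ If $$c<\frac{2(2n-3)\,\omega^2}{(n-1)(n^2-3n+4)},$$ then $\beta_j>0$ for all $j=1,\dots,n$.
   Context: The $\mu_j$ are the eigenvalues of the interaction matrix $A=\omega^2 I+cM_{\rm K}$, where $M_{\rm K}$ (the Krawtchouk matrix) has eigenvalues $\lambda_j=j-1$; $c$ is the coupling strength. *)

theory Defs
  imports Complex_Main
begin

definition mu :: "real \<Rightarrow> real \<Rightarrow> nat \<Rightarrow> real" where
  "mu \<omega> c j = \<omega>^2 + c * (real j - 1)"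

definition beta :: "nat \<Rightarrow> real \<Rightarrow> real \<Rightarrow> nat \<Rightarrow> real" where
  "beta n \<omega> c j = - sqrt (mu \<omega> c j) + (1 / (real n - 1)) * (\<Sum>k=1..n. sqrt (mu \<omega> c k))"

end

theory Submission
  imports Defs
begin

lemma gsum: "2 * (\<Sum>k=1..n. real n - real k) = real n * (real n - 1)"
proof (induction n)
  case 0 then show ?case by simp
next
  case (Suc n)
  have "(\<Sum>k=1..Suc n. real (Suc n) - real k) = (\<Sum>k=1..n. real (Suc n) - real k) + 0"
    by (simp add: sum.atLeast1_atMost_eq)
  also have "(\<Sum>k=1..n. real (Suc n) - real k) = (\<Sum>k=1..n. (real n - real k) + 1)"
    by (rule sum.cong) auto
  also have "\<dots> = (\<Sum>k=1..n. real n - real k) + real n"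
    by (simp add: sum.distrib)
  finally show ?case using Suc by (simp add: algebra_simps)
qed

theorem proposition3:
  fixes n :: nat and \<omega> c :: real
  assumes "n \<ge> 2" and "\<omega> > 0" and "c > 0"
    and "c < 2 * (2 * real n - 3) * \<omega>^2 / ((real n - 1) * ((real n)^2 - 3 * real n + 4))"
  shows "\<forall>j\<in>{1..n}. beta n \<omega> c j > 0"
proof -
  define w where "w = \<omega>^2"
  define S where "S = sqrt (mu \<omega> c n)"
  have w0: "w > 0" using assms(2) by (simp add: w_def)
  have rn: "real n \<ge> 2" using assms(1) by simp
  have S2: "S^2 = w + c * (real n - 1)" using rn assms(3) w0
    by (simp add: S_def mu_def w_def)
  have Sge: "S \<ge> \<omega>" unfolding S_def mu_def
    using rn assms(2,3) by (intro real_le_rsqrt) auto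
  have Spos: "S > 0" using Sge assms(2) by simp
  have sk: "sqrt (mu \<omega> c k) \<ge> \<omega>" if "k \<in> {1..n}" for k
    unfolding mu_def using that assms(2,3) by (intro real_le_rsqrt) auto
  have skle: "sqrt (mu \<omega> c k) \<le> S" if "k \<in> {1..n}" for k
    unfolding S_def mu_def using that assms(3) by (intro real_sqrt_le_mono) auto
  have diff: "S - sqrt (mu \<omega> c k) \<le> c * (real n - real k) / (S + \<omega>)" if k: "k \<in> {1..n}" for k
  proof -
    let ?s = "sqrt (mu \<omega> c k)"
    have s2: "?s^2 = w + c * (real k - 1)" using k assms(3) w0
      by (simp add: mu_def w_def)
    have prod: "(S - ?s) * (S + ?s) = c * (real n - real k)"
      using S2 s2 by (simp add: algebra_simps power2_eq_square)
    have "(S - ?s) * (S + \<omega>) \<le> (S - ?s) * (S + ?s)"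
      using sk[OF k] skle[OF k] by (intro mult_left_mono) auto
    then have "(S - ?s) * (S + \<omega>) \<le> c * (real n - real k)" using prod by simp
    then show ?thesis using Spos assms(2) by (simp add: pos_le_divide_eq)
  qed
  have sumdiff: "(\<Sum>k=1..n. S - sqrt (mu \<omega> c k)) \<le> (\<Sum>k=1..n. c * (real n - real k) / (S + \<omega>))"
    by (rule sum_mono) (rule diff)
  also have "\<dots> = c / (S + \<omega>) * (\<Sum>k=1..n. real n - real k)"
    by (simp add: sum_distrib_left)
  also have "\<dots> = c * real n * (real n - 1) / (2 * (S + \<omega>))"
  proof -
    have e: "(\<Sum>k=1..n. real n - real k) = real n * (real n - 1) / 2" using gsum[of n] by linarith
    have "S + \<omega> > 0" using Spos assms(2) by simp
    then show ?thesis unfolding e by (simp add: field_simps)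
  qed
  finally have sd: "(\<Sum>k=1..n. S - sqrt (mu \<omega> c k)) \<le> c * real n * (real n - 1) / (2 * (S + \<omega>))" .
  have sumS: "(\<Sum>k=1..n. S - sqrt (mu \<omega> c k)) = real n * S - (\<Sum>k=1..n. sqrt (mu \<omega> c k))"
    by (simp add: sum_subtractf)
  have q: "real n ^ 2 - 3 * real n + 4 > 0" 
  proof -
    have "real n ^ 2 - 3 * real n + 4 = (real n - 3/2)^2 + 7/4" by (simp add: power2_eq_square algebra_simps)
    moreover have "(real n - 3/2)^2 \<ge> 0" by simp
    ultimately show ?thesis by linarith
  qed
  have den: "(real n - 1) * (real n ^ 2 - 3 * real n + 4) > 0" using rn q by simp
  have h1: "c * ((real n - 1) * (real n ^ 2 - 3 * real n + 4)) < 2 * (2 * real n - 3) * w"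
    using assms(4) den by (simp add: w_def pos_less_divide_eq mult.commute)
  have h2: "(2 * real n - 3) * (c * (real n - 1) * (real n - 2)) \<le> 2 * (c * ((real n - 1) * (real n ^ 2 - 3 * real n + 4)))"
  proof -
    have "(2 * real n - 3) * (real n - 2) \<le> 2 * (real n ^ 2 - 3 * real n + 4)"
      using rn by (simp add: power2_eq_square algebra_simps)
    moreover have "c * (real n - 1) \<ge> 0" using rn assms(3) by simp
    ultimately have "(c * (real n - 1)) * ((2 * real n - 3) * (real n - 2)) \<le> (c * (real n - 1)) * (2 * (real n ^ 2 - 3 * real n + 4))"
      by (intro mult_left_mono)
    then show ?thesis by (simp add: algebra_simps)
  qed
  have "(2 * real n - 3) * (c * (real n - 1) * (real n - 2)) < (2 * real n - 3) * (4 * w)"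
    using h1 h2 by linarith
  then have h3: "c * (real n - 1) * (real n - 2) < 4 * w"
    using rn by (simp add: mult_less_cancel_left)
  have Sw: "S * \<omega> \<ge> w" unfolding w_def power2_eq_square
    using Sge assms(2) by (intro mult_right_mono) auto
  have key: "2 * S * (S + \<omega>) > c * real n * (real n - 1)"
  proof -
    have "2 * S * (S + \<omega>) = 2 * S^2 + 2 * (S * \<omega>)" by (simp add: power2_eq_square algebra_simps)
    also have "\<dots> \<ge> 2 * (w + c * (real n - 1)) + 2 * w" using S2 Sw by simp
    finally show ?thesis using h3 by (simp add: algebra_simps)
  qed
  have "c * real n * (real n - 1) / (2 * (S + \<omega>)) < S"
    using key Spos assms(2) by (simp add: pos_divide_less_eq mult.commute mult.left_commute)
  then have tot: "(real n - 1) * S < (\<Sum>k=1..n. sqrt (mu \<omega> c k))"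
    using sd sumS by (simp add: algebra_simps)
  show ?thesis
  proof
    fix j assume j: "j \<in> {1..n}"
    have "S < (\<Sum>k=1..n. sqrt (mu \<omega> c k)) / (real n - 1)"
      using tot rn by (simp add: pos_less_divide_eq mult.commute)
    then show "beta n \<omega> c j > 0" using skle[OF j] unfolding beta_def by simp
  qed
qed

end
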